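(* Let $\mathbb{X}$ be a reflexive Banach space and $\mathbb{Y}$ a finite-dimensional Banach space with $\dim(\mathbb{Y})=m$. Let $T\in\mathbb{L}(\mathbb{X},\mathbb{Y})$ with $\|T\|=1$ be such that $\{x_1,\ldots,x_r\}\subseteq M_T\cap\operatorname{Ext}(B_{\mathbb{X}})\subseteq\operatorname{span}\{x_1,\ldots,x_r\}$, where $\{x_1,\ldots,x_r\}$ is linearly independent. Suppose $Tx_i$ is $m$-smooth for $i=1,\ldots,r$. Then $T$ is $mr$-smooth.
   Context: $\mathbb{L}(\mathbb{X},\mathbb{Y})$ is the space of bounded linear operators with the operator norm. $B_{\mathbb{X}}$ is the closed unit ball, $\operatorname{Ext}(B_{\mathbb{X}})$ its set of extreme points, and $M_T=\{x\in\mathbb{X}:\|x\|=1,\ \|Tx\|=\|T\|\}$. For a Banach space $\mathbb{Z}$ and a unit vector $z$, $J(z)=\{f\in \mathbb{Z}^*:\|f\|=1,\ f(z)=1\}$; $z$ is $k$-smooth if $\dim\operatorname{span} J(z)=k$ (applied in $\mathbb{Y}$ for $Tx_i$ and in $\mathbb{L}(\mathbb{X},\mathbb{Y})$ for $T$). *)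

theory Defs
  imports "HOL-Analysis.Analysis"
begin

definition reflexive_space :: "'a::real_normed_vector itself \<Rightarrow> bool" where
  "reflexive_space (_ :: 'a itself) \<longleftrightarrow>
     (\<forall>\<phi> :: ('a \<Rightarrow>\<^sub>L real) \<Rightarrow>\<^sub>L real. \<exists>x :: 'a. \<forall>f. blinfun_apply \<phi> f = blinfun_apply f x)"

definition supp_fun :: "'z::real_normed_vector \<Rightarrow> ('z \<Rightarrow>\<^sub>L real) set" where
  "supp_fun z = {f. norm f = 1 \<and> blinfun_apply f z = 1}"

definition k_smooth :: "'z::real_normed_vector \<Rightarrow> nat \<Rightarrow> bool" where
  "k_smooth z k \<longleftrightarrow> norm z = 1 \<and>
     (\<exists>B. finite B \<and> span B = span (supp_fun z)) \<and> dim (supp_fun z) = k"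

definition norm_attaining_set :: "('a::real_normed_vector \<Rightarrow>\<^sub>L 'b::real_normed_vector) \<Rightarrow> 'a set" where
  "norm_attaining_set T = {x. norm x = 1 \<and> norm (blinfun_apply T x) = norm T}"

end

theory Submission
  imports Defs "HOL-Analysis.Analysis"
begin
definition hb_good :: "real \<Rightarrow> ('a::real_normed_vector \<times> real) set \<Rightarrow> bool" where
  "hb_good C G \<longleftrightarrow> (0,0) \<in> G \<and>
     (\<forall>x a y b. (x,a) \<in> G \<longrightarrow> (y,b) \<in> G \<longrightarrow> (x+y, a+b) \<in> G) \<and>
     (\<forall>x a c. (x,a) \<in> G \<longrightarrow> (c *\<^sub>R x, c*a) \<in> G) \<and>
     (\<forall>x a b. (x,a) \<in> G \<longrightarrow> (x,b) \<in> G \<longrightarrow> a = b) \<and>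
     (\<forall>x a. (x,a) \<in> G \<longrightarrow> a \<le> C * norm x)"

lemma hb_step:
  fixes M :: "('a::real_normed_vector \<times> real) set"
  assumes good: "hb_good C M" and w: "w \<notin> fst ` M" and C0: "0 \<le> C"
  shows "\<exists>M'. hb_good C M' \<and> M \<subseteq> M' \<and> M' \<noteq> M"
proof -
  have z: "(0,0) \<in> M"
   and ad: "\<And>x a y b. (x,a) \<in> M \<Longrightarrow> (y,b) \<in> M \<Longrightarrow> (x+y, a+b) \<in> M"
   and sc: "\<And>x a c. (x,a) \<in> M \<Longrightarrow> (c *\<^sub>R x, c*a) \<in> M"
   and sv: "\<And>x a b. (x,a) \<in> M \<Longrightarrow> (x,b) \<in> M \<Longrightarrow> a = b"
   and bd: "\<And>x a. (x,a) \<in> M \<Longrightarrow> a \<le> C * norm x"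
    using good unfolding hb_good_def by blast+
  have key: "b - C * norm (v - w) \<le> C * norm (v' + w) - b'"
    if "(v,b) \<in> M" "(v',b') \<in> M" for v b v' b'
  proof -
    have "b + b' \<le> C * norm (v + v')" using bd[OF ad[OF that]] .
    also have "norm (v + v') \<le> norm (v - w) + norm (v' + w)"
      using norm_triangle_ineq[of "v - w" "v' + w"] by simp
    then have "C * norm (v + v') \<le> C * norm (v - w) + C * norm (v' + w)"
      using C0 by (metis distrib_left mult_left_mono)
    finally show ?thesis by simp
  qed
  define S where "S = {b - C * norm (v - w) |v b. (v,b) \<in> M}"
  define s where "s = Sup S"
  have Sne: "S \<noteq> {}" using z S_def by blast
  have Sbd: "bdd_above S"
    unfolding bdd_above_def S_def using key[OF _ z] by auto
  have s1: "b - C * norm (v - w) \<le> s" if "(v,b) \<in> M" for v b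
    unfolding s_def using that Sbd by (intro cSup_upper) (auto simp: S_def)
  have s2: "s \<le> C * norm (v' + w) - b'" if "(v',b') \<in> M" for v' b'
    unfolding s_def using Sne that key by (intro cSup_least) (auto simp: S_def)
  define M' where "M' = {(u + t *\<^sub>R w, a + t * s) |u a t. (u,a) \<in> M}"
  have inM: "\<And>u a t. (u,a) \<in> M \<Longrightarrow> (u + t *\<^sub>R w, a + t * s) \<in> M'"
    unfolding M'_def by blast
  have sv': "t = t' \<and> u = u'" if "(u,a) \<in> M" "(u',a') \<in> M" "u + t *\<^sub>R w = u' + t' *\<^sub>R w"
    for u a t u' a' t'
  proof (cases "t = t'")
    case True then show ?thesis using that by simp
  next
    case False
    have "(t - t') *\<^sub>R w = u' - u" using that(3) by (simp add: algebra_simps)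
    moreover have "(1/(t-t')) *\<^sub>R ((t - t') *\<^sub>R w) = w" using False by simp
    ultimately have "w = (1/(t-t')) *\<^sub>R (u' - u)" by simp
    moreover have "((1/(t-t')) *\<^sub>R (u' + (-1) *\<^sub>R u), (1/(t-t')) * (a' + (-1) * a)) \<in> M"
      by (intro sc ad that)
    ultimately have "w \<in> fst ` M" by (force simp: image_iff)
    with w show ?thesis by simp
  qed
  have good': "hb_good C M'"
    unfolding hb_good_def
  proof (intro conjI allI impI)
    show "(0,0) \<in> M'" using inM[OF z, of 0] by simp
  next
    fix x a y b assume "(x,a) \<in> M'" "(y,b) \<in> M'"
    then obtain u1 a1 t1 u2 a2 t2 where "(u1,a1) \<in> M" "(u2,a2) \<in> M"
      "x = u1 + t1 *\<^sub>R w" "a = a1 + t1 * s" "y = u2 + t2 *\<^sub>R w" "b = a2 + t2 * s"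
      unfolding M'_def by blast
    then show "(x+y, a+b) \<in> M'"
      using inM[OF ad, of u1 a1 u2 a2 "t1+t2"] by (simp add: algebra_simps)
  next
    fix x a c assume "(x,a) \<in> M'"
    then obtain u1 a1 t1 where "(u1,a1) \<in> M" "x = u1 + t1 *\<^sub>R w" "a = a1 + t1 * s"
      unfolding M'_def by blast
    then show "(c *\<^sub>R x, c*a) \<in> M'"
      using inM[OF sc, of u1 a1 c "c*t1"] by (simp add: algebra_simps)
  next
    fix x a b assume "(x,a) \<in> M'" "(x,b) \<in> M'"
    then obtain u1 a1 t1 u2 a2 t2 where m: "(u1,a1) \<in> M" "(u2,a2) \<in> M"
      "x = u1 + t1 *\<^sub>R w" "a = a1 + t1 * s" "x = u2 + t2 *\<^sub>R w" "b = a2 + t2 * s"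
      unfolding M'_def by blast
    then have "t1 = t2 \<and> u1 = u2" using sv' by metis
    then show "a = b" using m sv by metis
  next
    fix x a assume "(x,a) \<in> M'"
    then obtain u a1 t where m: "(u,a1) \<in> M" "x = u + t *\<^sub>R w" "a = a1 + t * s"
      unfolding M'_def by blast
    consider "t = 0" | "t > 0" | "t < 0" by linarith
    then show "a \<le> C * norm x"
    proof cases
      case 1 then show ?thesis using m bd by simp
    next
      case 2
      have mm: "((1/t) *\<^sub>R u, (1/t) * a1) \<in> M" using sc[OF m(1)] .
      have "s \<le> C * norm ((1/t) *\<^sub>R u + w) - (1/t) * a1" using s2[OF mm] .
      then have "t * s \<le> t * (C * norm ((1/t) *\<^sub>R u + w) - (1/t) * a1)"
        using 2 by (simp add: mult_left_mono)
      also have "t * norm ((1/t) *\<^sub>R u + w) = norm (u + t *\<^sub>R w)"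
      proof -
        have "u + t *\<^sub>R w = t *\<^sub>R ((1/t) *\<^sub>R u + w)" using 2 by (simp add: algebra_simps)
        then show ?thesis using 2 by simp
      qed
      then have "t * (C * norm ((1/t) *\<^sub>R u + w) - (1/t) * a1) = C * norm (u + t *\<^sub>R w) - a1"
        using 2 by (simp add: algebra_simps)
      finally show ?thesis using m by simp
    next
      case 3
      define \<tau> where "\<tau> = - t"
      have tp: "\<tau> > 0" using 3 \<tau>_def by simp
      have mm: "((1/\<tau>) *\<^sub>R u, (1/\<tau>) * a1) \<in> M" using sc[OF m(1)] .
      have "(1/\<tau>) * a1 - C * norm ((1/\<tau>) *\<^sub>R u - w) \<le> s" using s1[OF mm] .
      then have "\<tau> * ((1/\<tau>) * a1 - C * norm ((1/\<tau>) *\<^sub>R u - w)) \<le> \<tau> * s"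
        using tp by (simp add: mult_left_mono)
      moreover have "\<tau> * norm ((1/\<tau>) *\<^sub>R u - w) = norm (u + t *\<^sub>R w)"
      proof -
        have "u + t *\<^sub>R w = \<tau> *\<^sub>R ((1/\<tau>) *\<^sub>R u - w)" using tp \<tau>_def by (simp add: algebra_simps)
        then show ?thesis using tp by simp
      qed
      ultimately have "a1 - C * norm (u + t *\<^sub>R w) \<le> \<tau> * s"
        using tp by (simp add: algebra_simps)
      then show ?thesis using m \<tau>_def by simp
    qed
  qed
  have sub: "M \<subseteq> M'" using inM[of _ _ 0] by auto
  have "(w, s) \<in> M'" using inM[OF z, of 1] by simp
  then have "M' \<noteq> M" using w by force
  with good' sub show ?thesis by blast
qed

lemma hb_goodD:
  assumes "hb_good C G"
  shows "(0,0) \<in> G"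
   and "\<And>x a y b. (x,a) \<in> G \<Longrightarrow> (y,b) \<in> G \<Longrightarrow> (x+y, a+b) \<in> G"
   and "\<And>x a c. (x,a) \<in> G \<Longrightarrow> (c *\<^sub>R x, c*a) \<in> G"
   and "\<And>x a b. (x,a) \<in> G \<Longrightarrow> (x,b) \<in> G \<Longrightarrow> a = b"
   and "\<And>x a. (x,a) \<in> G \<Longrightarrow> a \<le> C * norm x"
  using assms unfolding hb_good_def by blast+

lemma hb_graph:
  fixes G0 :: "('a::real_normed_vector \<times> real) set"
  assumes g0: "hb_good C G0" and C0: "0 \<le> C"
  shows "\<exists>g::'a \<Rightarrow>\<^sub>L real. (\<forall>x a. (x,a) \<in> G0 \<longrightarrow> blinfun_apply g x = a) \<and> norm g \<le> C"
proof -
  define A where "A = {G. hb_good C G \<and> G0 \<subseteq> G}"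
  have "\<exists>M\<in>A. \<forall>X\<in>A. M \<subseteq> X \<longrightarrow> X = M"
  proof (rule Zorn_Lemma2, intro ballI)
    fix Ch assume ch: "Ch \<in> chains A"
    show "\<exists>U\<in>A. \<forall>X\<in>Ch. X \<subseteq> U"
    proof (cases "Ch = {}")
      case True then show ?thesis using g0 by (auto simp: A_def)
    next
      case False
      have sub: "Ch \<subseteq> A" and cmp: "\<And>X Y. X \<in> Ch \<Longrightarrow> Y \<in> Ch \<Longrightarrow> X \<subseteq> Y \<or> Y \<subseteq> X"
        using ch unfolding chains_def chain_subset_def by auto
      have gX: "\<And>X. X \<in> Ch \<Longrightarrow> hb_good C X \<and> G0 \<subseteq> X" using sub A_def by auto
      have X0: "\<And>X. X \<in> Ch \<Longrightarrow> (0,0) \<in> X"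
       and Xad: "\<And>X x a y b. X \<in> Ch \<Longrightarrow> (x,a) \<in> X \<Longrightarrow> (y,b) \<in> X \<Longrightarrow> (x+y, a+b) \<in> X"
       and Xsc: "\<And>X x a c. X \<in> Ch \<Longrightarrow> (x,a) \<in> X \<Longrightarrow> (c *\<^sub>R x, c*a) \<in> X"
       and Xsv: "\<And>X x a b. X \<in> Ch \<Longrightarrow> (x,a) \<in> X \<Longrightarrow> (x,b) \<in> X \<Longrightarrow> a = b"
       and Xbd: "\<And>X x a. X \<in> Ch \<Longrightarrow> (x,a) \<in> X \<Longrightarrow> a \<le> C * norm x"
        using gX hb_goodD by metis+
      have "hb_good C (\<Union>Ch)"
        unfolding hb_good_def
      proof (intro conjI allI impI)
        show "(0,0) \<in> \<Union>Ch" using False X0 by blast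
      next
        fix x a y b assume "(x,a) \<in> \<Union>Ch" "(y,b) \<in> \<Union>Ch"
        then obtain X Y where XY: "X \<in> Ch" "Y \<in> Ch" "(x,a) \<in> X" "(y,b) \<in> Y" by blast
        from cmp[OF XY(1,2)] show "(x+y, a+b) \<in> \<Union>Ch"
        proof
          assume "X \<subseteq> Y" then show ?thesis using Xad[OF XY(2) _ XY(4)] XY by blast
        next
          assume "Y \<subseteq> X" then show ?thesis using Xad[OF XY(1) XY(3)] XY by blast
        qed
      next
        fix x a c assume "(x,a) \<in> \<Union>Ch"
        then show "(c *\<^sub>R x, c*a) \<in> \<Union>Ch" using Xsc by blast
      next
        fix x a b assume "(x,a) \<in> \<Union>Ch" "(x,b) \<in> \<Union>Ch"
        then obtain X Y where XY: "X \<in> Ch" "Y \<in> Ch" "(x,a) \<in> X" "(x,b) \<in> Y" by blast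
        from cmp[OF XY(1,2)] show "a = b"
        proof
          assume "X \<subseteq> Y" then show ?thesis using Xsv[OF XY(2) _ XY(4)] XY by blast
        next
          assume "Y \<subseteq> X" then show ?thesis using Xsv[OF XY(1) XY(3)] XY by blast
        qed
      next
        fix x a assume "(x,a) \<in> \<Union>Ch"
        then show "a \<le> C * norm x" using Xbd by blast
      qed
      moreover have "G0 \<subseteq> \<Union>Ch" using False gX by blast
      ultimately show ?thesis unfolding A_def by blast
    qed
  qed
  then obtain M where MA: "M \<in> A" and max: "\<And>X. X \<in> A \<Longrightarrow> M \<subseteq> X \<Longrightarrow> X = M" by blast
  have gM: "hb_good C M" and G0M: "G0 \<subseteq> M" using MA A_def by auto
  have tot: "\<exists>a. (x,a) \<in> M" for x
  proof (rule ccontr)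
    assume "\<nexists>a. (x, a) \<in> M"
    then have "x \<notin> fst ` M" by force
    from hb_step[OF gM this C0] obtain M' where "hb_good C M'" "M \<subseteq> M'" "M' \<noteq> M" by blast
    with max[of M'] G0M show False unfolding A_def by blast
  qed
  have z: "(0,0) \<in> M"
   and ad: "\<And>x a y b. (x,a) \<in> M \<Longrightarrow> (y,b) \<in> M \<Longrightarrow> (x+y, a+b) \<in> M"
   and sc: "\<And>x a c. (x,a) \<in> M \<Longrightarrow> (c *\<^sub>R x, c*a) \<in> M"
   and sv: "\<And>x a b. (x,a) \<in> M \<Longrightarrow> (x,b) \<in> M \<Longrightarrow> a = b"
   and bd: "\<And>x a. (x,a) \<in> M \<Longrightarrow> a \<le> C * norm x"
    using hb_goodD[OF gM] by blast+
  define g where "g x = (THE a. (x,a) \<in> M)" for x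
  have gM': "(x, g x) \<in> M" for x
    using tot[of x] sv unfolding g_def by (metis (no_types, lifting) theI)
  have gval: "(x,a) \<in> M \<Longrightarrow> g x = a" for x a using gM' sv by blast
  have lin: "linear g"
  proof
    fix x y show "g (x + y) = g x + g y" using gval[OF ad[OF gM' gM']] .
  next
    fix c x show "g (c *\<^sub>R x) = c *\<^sub>R g x" using gval[OF sc[OF gM']] by simp
  qed
  have gb: "norm (g x) \<le> C * norm x" for x
  proof -
    have "g x \<le> C * norm x" using bd[OF gM'] .
    moreover have "g (-x) \<le> C * norm x" using bd[OF gM', of "-x"] by simp
    moreover have "g (-x) = - g x" using linear_neg[OF lin] .
    ultimately show ?thesis by simp
  qed
  have bl: "bounded_linear g"
    by (rule bounded_linear_intro[where K=C]) (use lin gb in \<open>auto simp: linear_add linear_scale mult.commute\<close>)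
  show ?thesis
  proof (intro exI conjI allI impI)
    fix x a assume "(x,a) \<in> G0"
    then show "blinfun_apply (Blinfun g) x = a" using bounded_linear_Blinfun_apply[OF bl] gval G0M by auto
  next
    show "norm (Blinfun g) \<le> C"
      using C0 gb by (intro norm_blinfun_bound) (auto simp: bounded_linear_Blinfun_apply[OF bl])
  qed
qed

lemma hb_norming:
  fixes x :: "'a::real_normed_vector"
  shows "\<exists>g::'a \<Rightarrow>\<^sub>L real. norm g \<le> 1 \<and> blinfun_apply g x = norm x"
proof -
  define G0 where "G0 = {(t *\<^sub>R x, t * norm x) | t. True}"
  have "hb_good 1 G0"
    unfolding hb_good_def G0_def
  proof (intro conjI allI impI)
    show "(0,0) \<in> {(t *\<^sub>R x, t * norm x) | t. True}" by (rule CollectI, rule exI[of _ 0]) simp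
  next
    fix y a z b assume "(y,a) \<in> {(t *\<^sub>R x, t * norm x) | t. True}" "(z,b) \<in> {(t *\<^sub>R x, t * norm x) | t. True}"
    then obtain t1 t2 where "y = t1 *\<^sub>R x" "a = t1 * norm x" "z = t2 *\<^sub>R x" "b = t2 * norm x" by blast
    then show "(y+z, a+b) \<in> {(t *\<^sub>R x, t * norm x) | t. True}"
      by (intro CollectI exI[of _ "t1+t2"]) (simp add: algebra_simps)
  next
    fix y a c assume "(y,a) \<in> {(t *\<^sub>R x, t * norm x) | t. True}"
    then obtain t1 where "y = t1 *\<^sub>R x" "a = t1 * norm x" by blast
    then show "(c *\<^sub>R y, c*a) \<in> {(t *\<^sub>R x, t * norm x) | t. True}"
      by (intro CollectI exI[of _ "c*t1"]) (simp add: algebra_simps)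
  next
    fix y a b assume "(y,a) \<in> {(t *\<^sub>R x, t * norm x) | t. True}" "(y,b) \<in> {(t *\<^sub>R x, t * norm x) | t. True}"
    then obtain t1 t2 where "y = t1 *\<^sub>R x" "a = t1 * norm x" "y = t2 *\<^sub>R x" "b = t2 * norm x" by blast
    then show "a = b" by (cases "x = 0") (auto simp: scaleR_cancel_right)
  next
    fix y a assume "(y,a) \<in> {(t *\<^sub>R x, t * norm x) | t. True}"
    then obtain t1 where "y = t1 *\<^sub>R x" "a = t1 * norm x" by blast
    then show "a \<le> 1 * norm y" by (simp add: mult_right_mono)
  qed
  from hb_graph[OF this] obtain g :: "'a \<Rightarrow>\<^sub>L real" where
    "\<forall>y a. (y,a) \<in> G0 \<longrightarrow> blinfun_apply g y = a" "norm g \<le> 1" by auto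
  moreover have "(x, norm x) \<in> G0" unfolding G0_def by (rule CollectI, rule exI[of _ 1]) simp
  ultimately show ?thesis by blast
qed

lemma norm_via_functionals:
  fixes x :: "'a::real_normed_vector"
  assumes "\<And>g::'a \<Rightarrow>\<^sub>L real. norm g \<le> 1 \<Longrightarrow> blinfun_apply g x \<le> c"
  shows "norm x \<le> c"
  using hb_norming[of x] assms by force

lemma functionals_separate:
  fixes x y :: "'a::real_normed_vector"
  assumes "x \<noteq> y"
  shows "\<exists>g::'a \<Rightarrow>\<^sub>L real. blinfun_apply g x \<noteq> blinfun_apply g y"
proof -
  obtain g :: "'a \<Rightarrow>\<^sub>L real" where "blinfun_apply g (x - y) = norm (x - y)"
    using hb_norming by blast
  then have "blinfun_apply g x - blinfun_apply g y \<noteq> 0" using assms by (simp add: blinfun.diff_right)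
  then show ?thesis by auto
qed

lemma hb_codim1:
  fixes V :: "'a::real_normed_vector set"
  assumes V: "subspace V" "closed V" and w: "w \<notin> V"
  shows "\<exists>g::'a \<Rightarrow>\<^sub>L real. (\<forall>v\<in>V. blinfun_apply g v = 0) \<and> blinfun_apply g w = 1"
proof -
  have V0: "0 \<in> V" using V subspace_0 by blast
  define d where "d = infdist w V"
  have dpos: "d > 0"
    using in_closed_iff_infdist_zero[OF V(2)] V0 w infdist_nonneg[of w V] unfolding d_def by force
  have bnd: "\<bar>t\<bar> * d \<le> norm (v + t *\<^sub>R w)" if "v \<in> V" for v t
  proof (cases "t = 0")
    case True then show ?thesis by simp
  next
    case False
    have "- (1/t) *\<^sub>R v \<in> V" using that V(1) by (simp add: subspace_neg subspace_scale)
    then have "d \<le> dist w (- (1/t) *\<^sub>R v)" unfolding d_def by (rule infdist_le)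
    also have "dist w (- (1/t) *\<^sub>R v) = norm (w + (1/t) *\<^sub>R v)" by (simp add: dist_norm)
    finally have "\<bar>t\<bar> * d \<le> \<bar>t\<bar> * norm (w + (1/t) *\<^sub>R v)" by (simp add: mult_left_mono)
    also have "\<bar>t\<bar> * norm (w + (1/t) *\<^sub>R v) = norm (t *\<^sub>R (w + (1/t) *\<^sub>R v))" by simp
    also have "t *\<^sub>R (w + (1/t) *\<^sub>R v) = v + t *\<^sub>R w" using False by (simp add: algebra_simps)
    finally show ?thesis .
  qed
  define G0 where "G0 = {(v + t *\<^sub>R w, t) | v t. v \<in> V}"
  have uniq: "t = t'" if "v \<in> V" "v' \<in> V" "v + t *\<^sub>R w = v' + t' *\<^sub>R w" for v v' t t'
  proof (rule ccontr)
    assume ne: "t \<noteq> t'"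
    have "(t - t') *\<^sub>R w = v' - v" using that(3) by (simp add: algebra_simps)
    moreover have "(1/(t-t')) *\<^sub>R ((t - t') *\<^sub>R w) = w" using ne by simp
    ultimately have "w = (1/(t-t')) *\<^sub>R (v' - v)" by simp
    moreover have "(1/(t-t')) *\<^sub>R (v' - v) \<in> V" using V(1) that by (simp add: subspace_diff subspace_scale)
    ultimately show False using w by simp
  qed
  have "hb_good (1/d) G0"
    unfolding hb_good_def
  proof (intro conjI allI impI)
    show "(0,0) \<in> G0" unfolding G0_def using V0 by force
  next
    fix x a y b assume "(x,a) \<in> G0" "(y,b) \<in> G0"
    then obtain v1 v2 where "v1 \<in> V" "v2 \<in> V" "x = v1 + a *\<^sub>R w" "y = v2 + b *\<^sub>R w"
      unfolding G0_def by blast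
    then show "(x+y, a+b) \<in> G0" unfolding G0_def using V(1)
      by (auto simp: algebra_simps intro!: exI[of _ "v1+v2"] subspace_add)
  next
    fix x a c assume "(x,a) \<in> G0"
    then obtain v1 where "v1 \<in> V" "x = v1 + a *\<^sub>R w" unfolding G0_def by blast
    then show "(c *\<^sub>R x, c*a) \<in> G0" unfolding G0_def using V(1)
      by (auto simp: algebra_simps intro!: exI[of _ "c *\<^sub>R v1"] subspace_scale)
  next
    fix x a b assume "(x,a) \<in> G0" "(x,b) \<in> G0"
    then obtain v1 v2 where "v1 \<in> V" "v2 \<in> V" "x = v1 + a *\<^sub>R w" "x = v2 + b *\<^sub>R w"
      unfolding G0_def by blast
    then show "a = b" using uniq by metis
  next
    fix x a assume "(x,a) \<in> G0"
    then obtain v1 where "v1 \<in> V" "x = v1 + a *\<^sub>R w" unfolding G0_def by blast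
    then have "\<bar>a\<bar> * d \<le> norm x" using bnd by blast
    moreover have "a * d \<le> \<bar>a\<bar> * d" using dpos by (intro mult_right_mono) auto
    ultimately have "a * d \<le> norm x" by linarith
    then show "a \<le> 1/d * norm x" using dpos by (simp add: field_simps)
  qed
  from hb_graph[OF this] dpos obtain g :: "'a \<Rightarrow>\<^sub>L real" where
    g: "\<forall>y a. (y,a) \<in> G0 \<longrightarrow> blinfun_apply g y = a" by auto
  have "(v, 0) \<in> G0" if "v \<in> V" for v unfolding G0_def using that by force
  moreover have "(w, 1) \<in> G0"
  proof -
    have "(0 + 1 *\<^sub>R w, 1::real) \<in> G0" unfolding G0_def using V0 by blast
    then show ?thesis by simp
  qed
  ultimately show ?thesis using g by blast
qed

lemma closed_span_finite:
  fixes S :: "'a::real_normed_vector set"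
  assumes "finite S"
  shows "closed (span S)"
  using assms
proof (induction S rule: finite_induct)
  case empty then show ?case by simp
next
  case (insert w S)
  show ?case
  proof (cases "w \<in> span S")
    case True then show ?thesis using insert span_redundant by metis
  next
    case False
    obtain g :: "'a \<Rightarrow>\<^sub>L real" where g: "\<forall>v\<in>span S. blinfun_apply g v = 0" "blinfun_apply g w = 1"
      using hb_codim1[OF subspace_span insert.IH False] by blast
    have eq: "span (insert w S) = (\<lambda>z. z - blinfun_apply g z *\<^sub>R w) -` span S"
    proof (intro set_eqI iffI)
      fix z assume "z \<in> span (insert w S)"
      then obtain k where k: "z - k *\<^sub>R w \<in> span S" using span_breakdown_eq by blast
      have "blinfun_apply g (z - k *\<^sub>R w) = 0" using g k by blast
      then have "blinfun_apply g z = k" using g by (simp add: blinfun.diff_right blinfun.scaleR_right)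
      then show "z \<in> (\<lambda>z. z - blinfun_apply g z *\<^sub>R w) -` span S" using k by simp
    next
      fix z assume "z \<in> (\<lambda>z. z - blinfun_apply g z *\<^sub>R w) -` span S"
      then show "z \<in> span (insert w S)" using span_breakdown_eq by blast
    qed
    have "continuous_on UNIV (\<lambda>z. z - blinfun_apply g z *\<^sub>R w)"
      by (intro continuous_intros)
    then show ?thesis unfolding eq
      using closed_vimage insert.IH by (metis continuous_on_eq_continuous_within iso_tuple_UNIV_I)
  qed
qed

lemma functional_off_span:
  fixes S :: "'a::real_normed_vector set"
  assumes "finite S" "w \<notin> span S"
  shows "\<exists>g::'a \<Rightarrow>\<^sub>L real. (\<forall>v\<in>span S. blinfun_apply g v = 0) \<and> blinfun_apply g w = 1"
  using hb_codim1[OF subspace_span closed_span_finite[OF assms(1)] assms(2)] .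

lemma continuous_map_scaleR_const [continuous_intros]:
  fixes v :: "'b::real_normed_vector"
  shows "continuous_map X euclideanreal f \<Longrightarrow> continuous_map X euclidean (\<lambda>x. f x *\<^sub>R v)"
  by (simp add: continuous_map_atin tendsto_scaleR)

definition EV :: "'a::real_normed_vector \<Rightarrow> ('a \<Rightarrow>\<^sub>L real) \<Rightarrow> real" where
  "EV x = (\<lambda>g. blinfun_apply g x)"

abbreviation WQ :: "(('a::real_normed_vector \<Rightarrow>\<^sub>L real) \<Rightarrow> real) topology" where
  "WQ \<equiv> product_topology (\<lambda>_. euclideanreal) UNIV"

lemma EV_inj: "EV x = EV y \<Longrightarrow> x = y"
  using functionals_separate unfolding EV_def by metis

lemma WQ_proj: "continuous_map WQ euclideanreal (\<lambda>\<phi>. \<phi> g)"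
  using continuous_map_product_projection[of g UNIV "\<lambda>_. euclideanreal"] by simp

lemma WQ_Hausdorff: "Hausdorff_space WQ"
  by (simp add: Hausdorff_space_product_topology)

lemma compact_EV_ball:
  assumes refl: "reflexive_space TYPE('a::real_normed_vector)"
  shows "compactin WQ (EV ` cball (0::'a) 1)"
proof -
  define PB :: "(('a \<Rightarrow>\<^sub>L real) \<Rightarrow> real) set" where "PB = PiE UNIV (\<lambda>g. cball 0 (norm g))"
  define F where "F = (\<lambda>(g::'a \<Rightarrow>\<^sub>L real, h::'a \<Rightarrow>\<^sub>L real, c::real) (\<phi>::('a \<Rightarrow>\<^sub>L real) \<Rightarrow> real).
                    \<phi> (c *\<^sub>R g + h) - c * \<phi> g - \<phi> h)"
  define Lin where "Lin = \<Inter> ((\<lambda>p. {\<phi> \<in> topspace WQ. F p \<phi> \<in> {0}}) ` UNIV)"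
  have cPB: "compactin WQ PB" unfolding PB_def by (simp add: compactin_PiE)
  have cLin: "closedin WQ Lin"
    unfolding Lin_def
  proof (rule closedin_Inter)
    fix S assume "S \<in> range (\<lambda>p. {\<phi> \<in> topspace WQ. F p \<phi> \<in> {0}})"
    then obtain g h c where S: "S = {\<phi> \<in> topspace WQ. F (g,h,c) \<phi> \<in> {0}}" by auto
    have "continuous_map WQ euclideanreal (F (g,h,c))"
      unfolding F_def by (auto intro!: continuous_intros WQ_proj)
    then show "closedin WQ S" unfolding S by (rule closedin_continuous_map_preimage) simp
  qed simp
  have eq: "EV ` cball 0 1 = PB \<inter> Lin"
  proof (intro set_eqI iffI)
    fix \<phi> :: "('a \<Rightarrow>\<^sub>L real) \<Rightarrow> real" assume "\<phi> \<in> EV ` cball 0 1"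
    then obtain x :: 'a where x: "norm x \<le> 1" "\<phi> = EV x" by auto
    have b: "\<bar>blinfun_apply g x\<bar> \<le> norm g" for g :: "'a \<Rightarrow>\<^sub>L real"
    proof -
      have "norm (blinfun_apply g x) \<le> norm g * norm x" by (rule norm_blinfun)
      also have "\<dots> \<le> norm g" using x(1) by (simp add: mult_left_le)
      finally show ?thesis by simp
    qed
    have "\<phi> \<in> PB"
      unfolding PB_def x(2) EV_def using b by (simp add: PiE_iff)
    moreover have "\<phi> \<in> Lin" unfolding Lin_def F_def x(2) EV_def
      by (auto simp: blinfun.add_left blinfun.scaleR_left)
    ultimately show "\<phi> \<in> PB \<inter> Lin" by blast
  next
    fix \<phi> :: "('a \<Rightarrow>\<^sub>L real) \<Rightarrow> real" assume "\<phi> \<in> PB \<inter> Lin"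
    then have PB: "\<phi> \<in> PB" and L: "\<phi> \<in> Lin" by auto
    have pb: "\<And>g. \<bar>\<phi> g\<bar> \<le> norm g" using PB unfolding PB_def by (auto simp: PiE_iff)
    have lin0: "\<phi> (c *\<^sub>R g + h) = c * \<phi> g + \<phi> h" for g h c
    proof -
      have "\<phi> (c *\<^sub>R g + h) - c * \<phi> g - \<phi> h = 0" using L unfolding Lin_def F_def by auto
      then show ?thesis by linarith
    qed
    have p0: "\<phi> 0 = 0" using lin0[of 1 0 0] by simp
    have add: "\<phi> (g + h) = \<phi> g + \<phi> h" for g h using lin0[of 1 g h] by simp
    have scl: "\<phi> (c *\<^sub>R g) = c * \<phi> g" for c g using lin0[of c g 0] p0 by simp
    have bl: "bounded_linear \<phi>"
      by (rule bounded_linear_intro[where K=1]) (use add scl pb in auto)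
    obtain x :: 'a where x: "\<forall>f. blinfun_apply (Blinfun \<phi>) f = blinfun_apply f x"
      using refl unfolding reflexive_space_def by blast
    then have px: "\<phi> = EV x" unfolding EV_def using bounded_linear_Blinfun_apply[OF bl] by auto
    have "norm x \<le> 1"
    proof (rule norm_via_functionals)
      fix g :: "'a \<Rightarrow>\<^sub>L real" assume "norm g \<le> 1"
      then show "blinfun_apply g x \<le> 1" using pb[of g] px unfolding EV_def by auto
    qed
    then show "\<phi> \<in> EV ` cball 0 1" using px by auto
  qed
  show ?thesis unfolding eq
    by (rule closed_compactin[OF cPB]) (auto intro: closedin_Int cLin compactin_imp_closedin[OF WQ_Hausdorff cPB])
qed

definition wcl :: "'a::real_normed_vector set \<Rightarrow> bool" where
  "wcl C \<longleftrightarrow> C \<subseteq> cball 0 1 \<and> closedin WQ (EV ` C)"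

lemma WQ_topspace [simp]: "topspace WQ = UNIV"
  by simp

lemma wcl_ball:
  assumes "reflexive_space TYPE('a::real_normed_vector)"
  shows "wcl (cball (0::'a) 1)"
  unfolding wcl_def using compactin_imp_closedin[OF WQ_Hausdorff compact_EV_ball[OF assms]] by simp

lemma wcl_preimage:
  assumes "reflexive_space TYPE('a::real_normed_vector)"
    and F: "continuous_map WQ euclideanreal F" and S: "closed S"
  shows "wcl {x \<in> cball (0::'a) 1. F (EV x) \<in> S}"
proof -
  have eq: "EV ` {x \<in> cball (0::'a) 1. F (EV x) \<in> S} = EV ` cball 0 1 \<inter> {\<phi>. F \<phi> \<in> S}"
    by blast
  have "closedin WQ {\<phi> \<in> topspace WQ. F \<phi> \<in> S}"
    using closedin_continuous_map_preimage[OF F] S closed_closedin by blast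
  then have c1: "closedin WQ {\<phi>. F \<phi> \<in> S}" by (simp only: WQ_topspace UNIV_I simp_thms)
  have c2: "closedin WQ (EV ` cball (0::'a) 1)" using wcl_ball[OF assms(1)] unfolding wcl_def by blast
  show ?thesis unfolding wcl_def eq using closedin_Int[OF c2 c1] by blast
qed

lemma EV_inj_on: "inj_on EV A"
  by (meson EV_inj inj_onI)

lemma wcl_Int: "wcl C \<Longrightarrow> wcl D \<Longrightarrow> wcl (C \<inter> D)"
  unfolding wcl_def using image_Int[OF EV_inj_on[of UNIV]] by (auto intro: closedin_Int)

lemma wcl_Inter:
  assumes "\<C> \<noteq> {}" "\<And>C. C \<in> \<C> \<Longrightarrow> wcl C"
  shows "wcl (\<Inter>\<C>)"
proof -
  obtain C0 where C0: "C0 \<in> \<C>" using assms(1) by blast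
  have eq: "EV ` (\<Inter>\<C>) = (\<Inter>C\<in>\<C>. EV ` C)"
    using image_INT[OF EV_inj_on[of UNIV], of \<C> id C0] C0 by simp
  show ?thesis unfolding wcl_def eq
    using assms C0 unfolding wcl_def by (auto intro!: closedin_Inter)
qed

lemma wcl_fip:
  assumes refl: "reflexive_space TYPE('a::real_normed_vector)"
    and wc: "\<And>C. C \<in> \<C> \<Longrightarrow> wcl (C::'a set)"
    and fip: "\<And>F. finite F \<Longrightarrow> F \<subseteq> \<C> \<Longrightarrow> F \<noteq> {} \<Longrightarrow> \<Inter>F \<noteq> {}"
  shows "cball 0 1 \<inter> \<Inter>\<C> \<noteq> {}"
proof -
  let ?S = "EV ` cball (0::'a) 1"
  let ?U = "(\<lambda>C. EV ` C) ` \<C>"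
  have cS: "compactin WQ ?S" by (rule compact_EV_ball[OF refl])
  have cl: "\<forall>C\<in>?U. closedin WQ C" using wc unfolding wcl_def by blast
  have fi: "?S \<inter> \<Inter>F \<noteq> {}" if F: "finite F" "F \<subseteq> ?U" for F
  proof -
    obtain F' where F': "F' \<subseteq> \<C>" "finite F'" "F = (\<lambda>C. EV ` C) ` F'"
      using finite_subset_image[OF F(1) F(2)] by blast
    show "?S \<inter> \<Inter>F \<noteq> {}"
    proof (cases "F' = {}")
      case True
      then have "F = {}" using F'(3) by blast
      moreover have "EV 0 \<in> ?S" by simp
      ultimately show ?thesis by blast
    next
      case False
      then obtain x where x: "x \<in> \<Inter>F'" using fip[OF F'(2,1)] by blast
      obtain C0 where "C0 \<in> F'" using False by blast
      then have "x \<in> cball 0 1" using x F'(1) wc unfolding wcl_def by blast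
      then have "EV x \<in> ?S" by blast
      moreover have "EV x \<in> \<Inter>F" using x F'(3) by blast
      ultimately show ?thesis by blast
    qed
  qed
  have "?S \<subseteq> topspace WQ \<and>
    (\<forall>\<U>. (\<forall>C\<in>\<U>. closedin WQ C) \<and> (\<forall>\<F>. finite \<F> \<and> \<F> \<subseteq> \<U> \<longrightarrow> ?S \<inter> \<Inter>\<F> \<noteq> {}) \<longrightarrow> ?S \<inter> \<Inter>\<U> \<noteq> {})"
    by (rule compactin_fip[THEN iffD1, OF cS])
  then have "?S \<inter> \<Inter>?U \<noteq> {}" using cl fi by (metis (no_types, lifting))
  then obtain \<phi> where \<phi>: "\<phi> \<in> ?S" "\<phi> \<in> \<Inter>?U" by blast
  from \<phi>(1) obtain x :: 'a where x: "x \<in> cball 0 1" "\<phi> = EV x" by (rule imageE)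
  have "x \<in> C" if "C \<in> \<C>" for C
  proof -
    have "\<phi> \<in> EV ` C" using \<phi>(2) that by blast
    then obtain c where c: "c \<in> C" "\<phi> = EV c" by (rule imageE)
    have "x = c" using x(2) c(2) by (intro EV_inj) simp
    then show ?thesis using c(1) by simp
  qed
  then have "x \<in> \<Inter>\<C>" by (rule InterI)
  with x(1) have "x \<in> cball 0 1 \<inter> \<Inter>\<C>" by (rule IntI)
  then show ?thesis by blast
qed

lemma wcl_attains_max:
  fixes h :: "'a::real_normed_vector \<Rightarrow>\<^sub>L real"
  assumes refl: "reflexive_space TYPE('a)"
    and wc: "wcl (C::'a set)" and ne: "C \<noteq> {}"
  shows "\<exists>x\<in>C. \<forall>y\<in>C. blinfun_apply h y \<le> blinfun_apply h x"
proof -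
  have "compactin WQ (EV ` C)"
    by (rule closed_compactin[OF compact_EV_ball[OF refl]]) (use wc in \<open>auto simp: wcl_def\<close>)
  then have "compactin euclideanreal ((\<lambda>\<phi>. \<phi> h) ` EV ` C)"
    by (rule image_compactin) (rule WQ_proj)
  then have cp: "compact ((\<lambda>\<phi>. \<phi> h) ` EV ` C)" by simp
  have "(\<lambda>\<phi>. \<phi> h) ` EV ` C \<noteq> {}" using ne by simp
  from compact_attains_sup[OF cp this] obtain s where
    s: "s \<in> (\<lambda>\<phi>. \<phi> h) ` EV ` C" "\<forall>t \<in> (\<lambda>\<phi>. \<phi> h) ` EV ` C. t \<le> s" by blast
  then obtain x where "x \<in> C" "s = blinfun_apply h x" unfolding EV_def by auto
  with s show ?thesis unfolding EV_def by auto
qed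

lemma face_argmax:
  fixes h :: "'a::real_normed_vector \<Rightarrow>\<^sub>L real"
  assumes "convex C" "x0 \<in> C" "\<And>y. y \<in> C \<Longrightarrow> blinfun_apply h y \<le> blinfun_apply h x0"
  shows "{y\<in>C. blinfun_apply h y = blinfun_apply h x0} face_of C"
  unfolding face_of_def
proof (intro conjI)
  show "{y \<in> C. blinfun_apply h y = blinfun_apply h x0} \<subseteq> C" by blast
  show "convex {y \<in> C. blinfun_apply h y = blinfun_apply h x0}"
  proof (rule convexI)
    fix y z and u v :: real assume y: "y \<in> {y \<in> C. blinfun_apply h y = blinfun_apply h x0}"
      and z: "z \<in> {y \<in> C. blinfun_apply h y = blinfun_apply h x0}"
      and uv: "0 \<le> u" "0 \<le> v" "u + v = 1"
    have "u *\<^sub>R y + v *\<^sub>R z \<in> C" using assms(1) y z uv unfolding convex_def by blast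
    moreover have "blinfun_apply h (u *\<^sub>R y + v *\<^sub>R z) = u * blinfun_apply h y + v * blinfun_apply h z"
      by (simp add: blinfun.add_right blinfun.scaleR_right)
    moreover have "u * blinfun_apply h y + v * blinfun_apply h z = (u + v) * blinfun_apply h x0" using y z by (simp add: distrib_right)
    ultimately show "u *\<^sub>R y + v *\<^sub>R z \<in> {y \<in> C. blinfun_apply h y = blinfun_apply h x0}" using uv by simp
  qed
  show "\<forall>a\<in>C. \<forall>b\<in>C. \<forall>x\<in>{y \<in> C. blinfun_apply h y = blinfun_apply h x0}. x \<in> open_segment a b \<longrightarrow>
     a \<in> {y \<in> C. blinfun_apply h y = blinfun_apply h x0} \<and> b \<in> {y \<in> C. blinfun_apply h y = blinfun_apply h x0}"
  proof (intro ballI impI)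
  fix a b x assume ab: "a \<in> C" "b \<in> C" and x: "x \<in> {y \<in> C. blinfun_apply h y = blinfun_apply h x0}"
    and seg: "x \<in> open_segment a b"
  from seg obtain u where u: "0 < u" "u < 1" "x = (1 - u) *\<^sub>R a + u *\<^sub>R b" by (auto simp: in_segment)
  have "blinfun_apply h x = (1 - u) * blinfun_apply h a + u * blinfun_apply h b"
    using u by (simp add: blinfun.add_right blinfun.scaleR_right)
  moreover have "blinfun_apply h a \<le> blinfun_apply h x0" "blinfun_apply h b \<le> blinfun_apply h x0"
    using assms(3) ab by auto
  moreover have "(1 - u) * blinfun_apply h a \<le> (1 - u) * blinfun_apply h x0"
    "u * blinfun_apply h b \<le> u * blinfun_apply h x0"
    using calculation(2,3) u by (auto intro: mult_left_mono)
  moreover have "\<not> (1 - u) * blinfun_apply h a < (1 - u) * blinfun_apply h x0"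
    "\<not> u * blinfun_apply h b < u * blinfun_apply h x0"
    using calculation x by (auto simp: algebra_simps)
  ultimately have "blinfun_apply h a = blinfun_apply h x0 \<and> blinfun_apply h b = blinfun_apply h x0"
    using u by (metis diff_gt_0_iff_gt mult_strict_left_mono order_less_le)
  then show "a \<in> {y \<in> C. blinfun_apply h y = blinfun_apply h x0} \<and> b \<in> {y \<in> C. blinfun_apply h y = blinfun_apply h x0}"
    using ab by auto
  qed
qed

lemma finite_chain_Inter:
  assumes "finite \<F>" "\<F> \<noteq> {}" "\<And>X Y. X \<in> \<F> \<Longrightarrow> Y \<in> \<F> \<Longrightarrow> X \<subseteq> Y \<or> Y \<subseteq> X"
  shows "\<Inter>\<F> \<in> \<F>"
  using assms
proof (induction \<F> rule: finite_ne_induct)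
  case (singleton x) then show ?case by simp
next
  case (insert x F)
  have IH: "\<Inter>F \<in> F" using insert by blast
  have "x \<subseteq> \<Inter>F \<or> \<Inter>F \<subseteq> x" using insert.prems IH by blast
  then show ?case
  proof
    assume "x \<subseteq> \<Inter>F" then have "\<Inter>(insert x F) = x" by auto
    then show ?thesis by simp
  next
    assume "\<Inter>F \<subseteq> x" then have "\<Inter>(insert x F) = \<Inter>F" by auto
    then show ?thesis using IH by simp
  qed
qed

lemma wcl_level:
  fixes h :: "'a::real_normed_vector \<Rightarrow>\<^sub>L real"
  assumes refl: "reflexive_space TYPE('a)" and "wcl M"
  shows "wcl {y \<in> M. blinfun_apply h y = c}"
proof -
  have "wcl {x \<in> cball (0::'a) 1. (\<lambda>\<phi>. \<phi> h) (EV x) \<in> {c}}"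
    by (rule wcl_preimage[OF refl WQ_proj]) simp
  then have "wcl (M \<inter> {x \<in> cball (0::'a) 1. (\<lambda>\<phi>. \<phi> h) (EV x) \<in> {c}})"
    by (rule wcl_Int[OF assms(2)])
  moreover have "M \<inter> {x \<in> cball (0::'a) 1. (\<lambda>\<phi>. \<phi> h) (EV x) \<in> {c}} = {y \<in> M. blinfun_apply h y = c}"
    using assms(2) unfolding wcl_def EV_def by auto
  ultimately show ?thesis by simp
qed

lemma exists_extreme:
  assumes refl: "reflexive_space TYPE('a::real_normed_vector)"
    and F: "F face_of cball (0::'a) 1" "F \<noteq> {}" "wcl F"
  shows "\<exists>e\<in>F. e extreme_point_of cball 0 1"
proof -
  define A where "A = {G. G face_of F \<and> G \<noteq> {} \<and> wcl G}"
  have FA: "F \<in> A" unfolding A_def using F face_of_refl face_of_imp_convex by blast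
  have "\<exists>M\<in>uminus ` A. \<forall>X\<in>uminus ` A. M \<subseteq> X \<longrightarrow> X = M"
  proof (rule Zorn_Lemma2, intro ballI)
    fix Ch assume ch: "Ch \<in> chains (uminus ` A)"
    show "\<exists>U\<in>uminus ` A. \<forall>X\<in>Ch. X \<subseteq> U"
    proof (cases "Ch = {}")
      case True then show ?thesis using FA by blast
    next
      case False
      have sub: "Ch \<subseteq> uminus ` A" and cmp: "\<And>X Y. X \<in> Ch \<Longrightarrow> Y \<in> Ch \<Longrightarrow> X \<subseteq> Y \<or> Y \<subseteq> X"
        using ch unfolding chains_def chain_subset_def by auto
      define D where "D = uminus ` Ch"
      have DA: "D \<subseteq> A" using sub unfolding D_def by auto
      have Dne: "D \<noteq> {}" using False D_def by blast
      have Dcmp: "X \<subseteq> Y \<or> Y \<subseteq> X" if "X \<in> D" "Y \<in> D" for X Y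
        using cmp that unfolding D_def by blast
      have face: "\<Inter>D face_of F" using DA Dne unfolding A_def by (intro face_of_Inter) auto
      have wclD: "wcl (\<Inter>D)" using DA Dne unfolding A_def by (intro wcl_Inter) auto
      have "cball 0 1 \<inter> \<Inter>D \<noteq> {}"
      proof (rule wcl_fip[OF refl])
        show "\<And>C. C \<in> D \<Longrightarrow> wcl C" using DA unfolding A_def by auto
      next
        fix G assume G: "finite G" "G \<subseteq> D" "G \<noteq> {}"
        have "\<Inter>G \<in> G" using finite_chain_Inter[OF G(1,3)] Dcmp G(2) by blast
        then show "\<Inter>G \<noteq> {}" using G(2) DA unfolding A_def by blast
      qed
      then have "\<Inter>D \<in> A" using face wclD unfolding A_def by blast
      moreover have "X \<subseteq> - \<Inter>D" if "X \<in> Ch" for X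
      proof -
        have "- X \<in> D" using that D_def by blast
        then have "\<Inter>D \<subseteq> - X" by blast
        then show ?thesis by blast
      qed
      ultimately show ?thesis by blast
    qed
  qed
  then obtain M where MA: "M \<in> A" and minM: "\<And>G. G \<in> A \<Longrightarrow> G \<subseteq> M \<Longrightarrow> G = M"
    by (metis (no_types, lifting) Compl_subset_Compl_iff double_complement image_eqI imageE)
  have Mface: "M face_of F" and Mne: "M \<noteq> {}" and Mw: "wcl M" using MA A_def by auto
  have noh: False if ab: "a \<in> M" "b \<in> M" and hab: "blinfun_apply h a < blinfun_apply h b" for a b and h :: "'a \<Rightarrow>\<^sub>L real"
  proof -
    obtain x0 where x0: "x0 \<in> M" "\<And>y. y \<in> M \<Longrightarrow> blinfun_apply h y \<le> blinfun_apply h x0"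
      using wcl_attains_max[OF refl Mw Mne, of h] by blast
    define G where "G = {y \<in> M. blinfun_apply h y = blinfun_apply h x0}"
    have "G face_of M" unfolding G_def
      by (rule face_argmax[OF face_of_imp_convex[OF Mface] x0])
    then have "G face_of F" using Mface face_of_trans by blast
    moreover have "G \<noteq> {}" using x0 G_def by blast
    moreover have "wcl G" unfolding G_def by (rule wcl_level[OF refl Mw])
    ultimately have "G \<in> A" unfolding A_def by blast
    moreover have "G \<subseteq> M" unfolding G_def by blast
    ultimately have "G = M" using minM by blast
    then have "blinfun_apply h a = blinfun_apply h x0" using ab G_def by blast
    moreover have "blinfun_apply h b \<le> blinfun_apply h x0" using x0 ab by blast
    ultimately show False using hab by simp
  qed
  obtain e where e: "e \<in> M" using Mne by blast
  have "M = {e}"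
  proof (intro set_eqI iffI)
    fix b assume b: "b \<in> M"
    show "b \<in> {e}"
    proof (rule ccontr)
      assume "b \<notin> {e}"
      then obtain h :: "'a \<Rightarrow>\<^sub>L real" where "blinfun_apply h e \<noteq> blinfun_apply h b"
        using functionals_separate[of e b] by auto
      then have "blinfun_apply h e < blinfun_apply h b \<or> blinfun_apply h b < blinfun_apply h e" by linarith
      then show False using noh e b by blast
    qed
  qed (use e in simp)
  then have "{e} face_of cball 0 1" using Mface F(1) face_of_trans by metis
  then have "e extreme_point_of cball 0 1" by (simp add: face_of_singleton)
  moreover have "e \<in> F" using e Mface face_of_imp_subset by blast
  ultimately show ?thesis by blast
qed

lemma dual_family:
  fixes A :: "'a::real_normed_vector set"
  assumes "finite A" "independent A"
  shows "\<exists>c::'a \<Rightarrow> ('a \<Rightarrow>\<^sub>L real). \<forall>a\<in>A. \<forall>a'\<in>A. blinfun_apply (c a) a' = (if a' = a then 1 else 0)"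
proof -
  have ex: "\<exists>g::'a \<Rightarrow>\<^sub>L real. (\<forall>v\<in>span (A - {a}). blinfun_apply g v = 0) \<and> blinfun_apply g a = 1"
    if "a \<in> A" for a
  proof (rule functional_off_span)
    show "finite (A - {a})" using assms(1) by simp
    show "a \<notin> span (A - {a})" using assms(2) that dependent_def by blast
  qed
  define c where "c a = (SOME g::'a \<Rightarrow>\<^sub>L real. (\<forall>v\<in>span (A - {a}). blinfun_apply g v = 0) \<and> blinfun_apply g a = 1)" for a
  have c: "(\<forall>v\<in>span (A - {a}). blinfun_apply (c a) v = 0) \<and> blinfun_apply (c a) a = 1" if "a \<in> A" for a
    unfolding c_def using someI_ex[OF ex[OF that]] .
  show ?thesis
  proof (intro exI ballI)
    fix a a' assume aa: "a \<in> A" "a' \<in> A"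
    show "blinfun_apply (c a) a' = (if a' = a then 1 else 0)"
    proof (cases "a' = a")
      case True then show ?thesis using c aa by simp
    next
      case False
      then have "a' \<in> span (A - {a})" using aa by (intro span_base) simp
      then show ?thesis using c[OF aa(1)] False by simp
    qed
  qed
qed

lemma expand_dual:
  fixes A :: "'a::real_normed_vector set" and c :: "'a \<Rightarrow> ('a \<Rightarrow>\<^sub>L real)"
  assumes A: "finite A" and c: "\<forall>a\<in>A. \<forall>a'\<in>A. blinfun_apply (c a) a' = (if a' = a then 1 else 0)"
    and y: "y \<in> span A"
  shows "y = (\<Sum>v\<in>A. blinfun_apply (c v) y *\<^sub>R v)"
proof -
  obtain u where u: "y = (\<Sum>v\<in>A. u v *\<^sub>R v)" using y span_finite[OF A] by blast
  have "blinfun_apply (c w) y = u w" if w: "w \<in> A" for w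
  proof -
    have "blinfun_apply (c w) y = (\<Sum>v\<in>A. u v * blinfun_apply (c w) v)"
      unfolding u by (simp add: blinfun.sum_right blinfun.scaleR_right)
    also have "\<dots> = (\<Sum>v\<in>A. if v = w then u v else 0)"
      using c w by (intro sum.cong) auto
    also have "\<dots> = u w" using A w by simp
    finally show ?thesis .
  qed
  then show ?thesis unfolding u by (intro sum.cong) auto
qed

lemma norm_le_from_ball:
  fixes S :: "'a::real_normed_vector \<Rightarrow>\<^sub>L 'b::real_normed_vector"
  assumes "0 \<le> a" "\<And>x. norm x \<le> 1 \<Longrightarrow> norm (blinfun_apply S x) \<le> a"
  shows "norm S \<le> a"
proof (rule norm_blinfun_bound[OF assms(1)])
  fix x
  show "norm (blinfun_apply S x) \<le> a * norm x"
  proof (cases "x = 0")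
    case True then show ?thesis by simp
  next
    case False
    have "norm (blinfun_apply S ((1 / norm x) *\<^sub>R x)) \<le> a" using assms(2) False by simp
    then have "(1 / norm x) * norm (blinfun_apply S x) \<le> a"
      by (simp add: blinfun.scaleR_right)
    then show ?thesis using False by (simp add: field_simps)
  qed
qed

definition tns :: "('a::real_normed_vector \<Rightarrow>\<^sub>L real) \<Rightarrow> 'b::real_normed_vector \<Rightarrow> ('a \<Rightarrow>\<^sub>L 'b)" where
  "tns g y = Blinfun (\<lambda>x. blinfun_apply g x *\<^sub>R y)"

lemma tns_apply [simp]: "blinfun_apply (tns g y) x = blinfun_apply g x *\<^sub>R y"
proof -
  have "bounded_linear (\<lambda>x. blinfun_apply g x *\<^sub>R y)"
    using bounded_linear_compose[OF bounded_linear_scaleR_left blinfun.bounded_linear_right] .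
  then show ?thesis unfolding tns_def by (simp add: bounded_linear_Blinfun_apply)
qed

definition evf :: "'a::real_normed_vector \<Rightarrow> ('b::real_normed_vector \<Rightarrow>\<^sub>L real) \<Rightarrow> (('a \<Rightarrow>\<^sub>L 'b) \<Rightarrow>\<^sub>L real)" where
  "evf u \<phi> = Blinfun (\<lambda>S. blinfun_apply \<phi> (blinfun_apply S u))"

lemma evf_apply [simp]: "blinfun_apply (evf u \<phi>) S = blinfun_apply \<phi> (blinfun_apply S u)"
proof -
  have "bounded_linear (\<lambda>S. blinfun_apply \<phi> (blinfun_apply S u))"
    using bounded_linear_compose[OF blinfun.bounded_linear_right blinfun.bounded_linear_left] .
  then show ?thesis unfolding evf_def by (simp add: bounded_linear_Blinfun_apply)
qed

lemma norm_evf: "norm (evf u \<phi>) \<le> norm \<phi> * norm u"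
proof (rule norm_blinfun_bound)
  show "0 \<le> norm \<phi> * norm u" by simp
  fix S :: "'a \<Rightarrow>\<^sub>L 'b"
  have "norm (blinfun_apply \<phi> (blinfun_apply S u)) \<le> norm \<phi> * norm (blinfun_apply S u)" by (rule norm_blinfun)
  also have "\<dots> \<le> norm \<phi> * (norm S * norm u)" by (intro mult_left_mono norm_blinfun) simp
  finally show "norm (blinfun_apply (evf u \<phi>) S) \<le> norm \<phi> * norm u * norm S" by (simp add: ac_simps)
qed

lemma evf_linear: "linear (evf u)"
proof
  fix \<phi> \<psi> show "evf u (\<phi> + \<psi>) = evf u \<phi> + evf u \<psi>"
    by (rule blinfun_eqI) (simp add: blinfun.add_left)
next
  fix c \<phi> show "evf u (c *\<^sub>R \<phi>) = c *\<^sub>R evf u \<phi>"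
    by (rule blinfun_eqI) (simp add: blinfun.scaleR_left)
qed

lemma tns_linear_left: "linear (\<lambda>g. tns g y)"
proof
  fix g h show "tns (g + h) y = tns g y + tns h y"
    by (rule blinfun_eqI) (simp add: blinfun.add_left scaleR_add_left)
next
  fix c g show "tns (c *\<^sub>R g) y = c *\<^sub>R tns g y"
    by (rule blinfun_eqI) (simp add: blinfun.scaleR_left)
qed

lemma tns_neg_right: "tns g (- y) = - tns g y"
  by (rule blinfun_eqI) (simp add: uminus_blinfun.rep_eq)

lemma ball_T_bound:
  fixes T :: "'a::real_normed_vector \<Rightarrow>\<^sub>L 'b::real_normed_vector"
  assumes "norm T = 1" "norm x \<le> 1"
  shows "norm (blinfun_apply T x) \<le> 1"
proof -
  have "norm (blinfun_apply T x) \<le> norm T * norm x" by (rule norm_blinfun)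
  also have "\<dots> \<le> 1" using assms by simp
  finally show ?thesis .
qed

lemma MT_in_span:
  fixes T :: "'a::real_normed_vector \<Rightarrow>\<^sub>L 'b::real_normed_vector"
  assumes refl: "reflexive_space TYPE('a)" and nT: "norm T = 1"
    and V: "finite Xs" "norm_attaining_set T \<inter> {e. e extreme_point_of cball 0 1} \<subseteq> span Xs"
    and x0: "x0 \<in> norm_attaining_set T"
  shows "x0 \<in> span Xs"
proof (rule ccontr)
  assume nx: "x0 \<notin> span Xs"
  have x0n: "norm x0 = 1" "norm (blinfun_apply T x0) = 1"
    using x0 nT unfolding norm_attaining_set_def by auto
  obtain \<psi> :: "'b \<Rightarrow>\<^sub>L real" where \<psi>: "norm \<psi> \<le> 1" "blinfun_apply \<psi> (blinfun_apply T x0) = 1"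
    using hb_norming[of "blinfun_apply T x0"] x0n by auto
  define h where "h = \<psi> o\<^sub>L T"
  have hx0: "blinfun_apply h x0 = 1" using \<psi> h_def by simp
  have hle: "blinfun_apply h y \<le> 1" if "norm y \<le> 1" for y
  proof -
    have "blinfun_apply h y \<le> norm (blinfun_apply \<psi> (blinfun_apply T y))" unfolding h_def by simp
    also have "\<dots> \<le> norm \<psi> * norm (blinfun_apply T y)" by (rule norm_blinfun)
    also have "\<dots> \<le> 1 * 1" using \<psi>(1) ball_T_bound[OF nT that] by (intro mult_mono) auto
    finally show ?thesis by simp
  qed
  define F where "F = {y \<in> cball (0::'a) 1. blinfun_apply h y = blinfun_apply h x0}"
  have x0B: "x0 \<in> cball (0::'a) 1" using x0n by simp
  have Fface: "F face_of cball 0 1" unfolding F_def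
    by (rule face_argmax[OF convex_cball x0B]) (use hle hx0 in simp)
  have Fw: "wcl F" unfolding F_def by (rule wcl_level[OF refl wcl_ball[OF refl]])
  have FNA: "y \<in> norm_attaining_set T" if "y \<in> F" for y
  proof -
    have y: "norm y \<le> 1" "blinfun_apply h y = 1" using that hx0 unfolding F_def by auto
    have "1 \<le> norm (blinfun_apply \<psi> (blinfun_apply T y))" using y(2) unfolding h_def by simp
    also have "\<dots> \<le> norm \<psi> * norm (blinfun_apply T y)" by (rule norm_blinfun)
    also have "\<dots> \<le> norm (blinfun_apply T y)" using \<psi>(1) by (simp add: mult_left_le_one_le)
    finally have a: "1 \<le> norm (blinfun_apply T y)" .
    have b: "norm (blinfun_apply T y) \<le> norm y" using norm_blinfun[of T y] nT by simp
    show ?thesis unfolding norm_attaining_set_def using a b y(1) ball_T_bound[OF nT y(1)] nT by simp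
  qed
  obtain g :: "'a \<Rightarrow>\<^sub>L real" where g: "\<forall>v\<in>span Xs. blinfun_apply g v = 0" "blinfun_apply g x0 = 1"
    using functional_off_span[OF V(1) nx] by blast
  have Fne: "F \<noteq> {}" using x0B F_def by blast
  obtain x1 where x1: "x1 \<in> F" "\<And>y. y \<in> F \<Longrightarrow> blinfun_apply g y \<le> blinfun_apply g x1"
    using wcl_attains_max[OF refl Fw Fne, of g] by blast
  define F' where "F' = {y \<in> F. blinfun_apply g y = blinfun_apply g x1}"
  have "F' face_of F" unfolding F'_def
    by (rule face_argmax[OF face_of_imp_convex[OF Fface] x1])
  then have F'face: "F' face_of cball 0 1" using Fface face_of_trans by blast
  have F'w: "wcl F'" unfolding F'_def by (rule wcl_level[OF refl Fw])
  have F'ne: "F' \<noteq> {}" using x1 F'_def by blast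
  obtain e where e: "e \<in> F'" "e extreme_point_of cball 0 1"
    using exists_extreme[OF refl F'face F'ne F'w] by blast
  have "e \<in> norm_attaining_set T" using e FNA F'_def by blast
  then have "e \<in> span Xs" using e V(2) by blast
  then have "blinfun_apply g e = 0" using g by blast
  moreover have "blinfun_apply g e = blinfun_apply g x1" using e F'_def by blast
  moreover have "blinfun_apply g x0 \<le> blinfun_apply g x1" using x1 x0B F_def by blast
  ultimately show False using g by simp
qed

lemma deriv_pos_False:
  fixes T :: "'a::real_normed_vector \<Rightarrow>\<^sub>L 'b::real_normed_vector"
    and c :: "'b \<Rightarrow> ('b \<Rightarrow>\<^sub>L real)"
  assumes refl: "reflexive_space TYPE('a)" and nT: "norm T = 1"
    and V: "finite Xs" "norm_attaining_set T \<inter> {e. e extreme_point_of cball 0 1} \<subseteq> span Xs"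
    and E: "finite E" "\<forall>a\<in>E. \<forall>a'\<in>E. blinfun_apply (c a) a' = (if a' = a then 1 else 0)"
    "\<And>y. y \<in> span E"
    and f: "f \<in> supp_fun T" and g: "\<forall>v\<in>span Xs. blinfun_apply g v = 0"
    and pos: "blinfun_apply f (tns g y) > 0"
  shows False
proof -
  define a where "a = blinfun_apply f (tns g y)"
  have fn: "norm f = 1" "blinfun_apply f T = 1" using f unfolding supp_fun_def by auto
  have y0: "y \<noteq> 0"
  proof
    assume "y = 0"
    then have "tns g y = 0" by (intro blinfun_eqI) simp
    then show False using pos by simp
  qed
  define K where "K = norm y"
  have Kp: "K > 0" using y0 K_def by simp
  define \<delta> where "\<delta> = a / (2 * K)"
  have ap: "a > 0" using pos a_def by simp
  have dp: "\<delta> > 0" using ap Kp \<delta>_def by simp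
  have near: "\<exists>x. norm x \<le> 1 \<and> 1 - \<epsilon> \<le> norm (blinfun_apply T x) \<and> \<delta> \<le> \<bar>blinfun_apply g x\<bar>"
    if ep: "\<epsilon> > 0" for \<epsilon>
  proof -
    define t where "t = \<epsilon> / (norm g * K + 1)"
    have den: "norm g * K + 1 > 0" using Kp by (simp add: add_nonneg_pos)
    have tp: "t > 0" using ep den t_def by simp
    have teq: "t * (norm g * K + 1) = \<epsilon>" using den t_def by simp
    define S where "S = T + t *\<^sub>R tns g y"
    have e1: "blinfun_apply f S = 1 + t * a"
      unfolding S_def a_def using fn by (simp add: blinfun.add_right blinfun.scaleR_right)
    have e2: "blinfun_apply f S \<le> norm S"
      using norm_blinfun[of f S] fn by simp
    have nS: "1 + t * a \<le> norm S" using e1 e2 by linarith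
    have "\<exists>x. norm x \<le> 1 \<and> norm (blinfun_apply S x) > 1 + t * a / 2"
    proof (rule ccontr)
      assume "\<not> ?thesis"
      then have "\<And>x. norm x \<le> 1 \<Longrightarrow> norm (blinfun_apply S x) \<le> 1 + t * a / 2" by force
      then have "norm S \<le> 1 + t * a / 2" using tp ap by (intro norm_le_from_ball) auto
      moreover have "t * a > 0" using tp ap by simp
      ultimately show False using nS by linarith
    qed
    then obtain x where x: "norm x \<le> 1" "norm (blinfun_apply S x) > 1 + t * a / 2" by blast
    have Sx: "blinfun_apply S x = blinfun_apply T x + (t * blinfun_apply g x) *\<^sub>R y"
      unfolding S_def by (simp add: blinfun.add_left blinfun.scaleR_left)
    have "norm (blinfun_apply S x) \<le> norm (blinfun_apply T x) + t * \<bar>blinfun_apply g x\<bar> * K"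
      unfolding Sx K_def using norm_triangle_ineq[of "blinfun_apply T x" "(t * blinfun_apply g x) *\<^sub>R y"] tp
      by (simp add: abs_mult)
    then have ineq: "1 + t * a / 2 < norm (blinfun_apply T x) + t * \<bar>blinfun_apply g x\<bar> * K" using x(2) by linarith
    have Tx1: "norm (blinfun_apply T x) \<le> 1" by (rule ball_T_bound[OF nT x(1)])
    have "norm (blinfun_apply g x) \<le> norm g * norm x" by (rule norm_blinfun)
    also have "\<dots> \<le> norm g" using x(1) by (simp add: mult_left_le)
    finally have gx: "\<bar>blinfun_apply g x\<bar> \<le> norm g" by simp
    have "t * a / 2 < t * (\<bar>blinfun_apply g x\<bar> * K)" using ineq Tx1 by (simp add: algebra_simps)
    then have "a / 2 < \<bar>blinfun_apply g x\<bar> * K" using tp by (simp add: mult_less_cancel_left_pos)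
    then have d: "\<delta> \<le> \<bar>blinfun_apply g x\<bar>" unfolding \<delta>_def using Kp by (simp add: field_simps)
    have "t * \<bar>blinfun_apply g x\<bar> * K \<le> t * (norm g * K)"
      using gx tp Kp by (simp add: mult_right_mono)
    also have "\<dots> \<le> \<epsilon>" using teq tp by (simp add: algebra_simps)
    finally have l: "t * \<bar>blinfun_apply g x\<bar> * K \<le> \<epsilon>" .
    have "t * a / 2 > 0" using tp ap by simp
    then have "1 - \<epsilon> \<le> norm (blinfun_apply T x)" using ineq l by linarith
    then show ?thesis using x(1) d by blast
  qed
  define NF where "NF = (\<lambda>\<phi>::('a \<Rightarrow>\<^sub>L real) \<Rightarrow> real. norm (\<Sum>v\<in>E. \<phi> (c v o\<^sub>L T) *\<^sub>R v))"
  have NFc: "continuous_map WQ euclideanreal NF"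
    unfolding NF_def
    apply (rule continuous_map_norm)
    apply (rule continuous_map_sum[OF E(1)])
    apply (rule continuous_map_scaleR_const)
    apply (rule WQ_proj)
    done
  have NFx: "NF (EV x) = norm (blinfun_apply T x)" for x
  proof -
    have "blinfun_apply T x = (\<Sum>v\<in>E. blinfun_apply (c v) (blinfun_apply T x) *\<^sub>R v)"
      by (rule expand_dual[OF E(1,2) E(3)])
    then show ?thesis unfolding NF_def EV_def by simp
  qed
  have Gc: "continuous_map WQ euclideanreal (\<lambda>\<phi>. \<bar>\<phi> g\<bar>)"
    by (rule continuous_map_real_abs[OF WQ_proj])
  define C where "C n = {x \<in> cball (0::'a) 1. NF (EV x) \<in> {1 - 1 / real (Suc n)..}} \<inter>
                        {x \<in> cball (0::'a) 1. (\<lambda>\<phi>. \<bar>\<phi> g\<bar>) (EV x) \<in> {\<delta>..}}" for n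
  have Cw: "wcl (C n)" for n
    unfolding C_def by (intro wcl_Int wcl_preimage[OF refl] NFc Gc closed_atLeast)
  have Cmem: "x \<in> C n \<longleftrightarrow> norm x \<le> 1 \<and> 1 - 1 / real (Suc n) \<le> norm (blinfun_apply T x) \<and> \<delta> \<le> \<bar>blinfun_apply g x\<bar>"
    for x n unfolding C_def NFx by (simp add: EV_def) blast
  have Cne: "C n \<noteq> {}" for n
  proof -
    obtain x where "norm x \<le> 1 \<and> 1 - 1 / real (Suc n) \<le> norm (blinfun_apply T x) \<and> \<delta> \<le> \<bar>blinfun_apply g x\<bar>"
      using near[of "1 / real (Suc n)"] by auto
    then show ?thesis using Cmem by blast
  qed
  have Cmono: "C n \<subseteq> C k" if "k \<le> n" for k n
  proof
    fix x assume "x \<in> C n"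
    moreover have "1 / real (Suc n) \<le> 1 / real (Suc k)" using that by (simp add: frac_le)
    ultimately show "x \<in> C k" unfolding Cmem by linarith
  qed
  have "cball 0 1 \<inter> \<Inter>(range C) \<noteq> {}"
  proof (rule wcl_fip[OF refl])
    show "\<And>D. D \<in> range C \<Longrightarrow> wcl D" using Cw by blast
  next
    fix F assume F: "finite F" "F \<subseteq> range C" "F \<noteq> {}"
    obtain N where N: "finite N" "F = C ` N" using finite_subset_image[OF F(1) F(2)] by blast
    have Nne: "N \<noteq> {}" using N F(3) by blast
    have "C (Max N) \<subseteq> \<Inter>F"
    proof
      fix x assume "x \<in> C (Max N)"
      then have "x \<in> C k" if "k \<in> N" for k using Cmono[of k "Max N"] Max_ge[OF N(1) that] by blast
      then show "x \<in> \<Inter>F" using N(2) by blast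
    qed
    then show "\<Inter>F \<noteq> {}" using Cne[of "Max N"] by blast
  qed
  then obtain x where x: "x \<in> cball 0 1" "\<And>n. x \<in> C n" by blast
  have xb: "norm x \<le> 1" "\<And>n. 1 - 1 / real (Suc n) \<le> norm (blinfun_apply T x)" "\<delta> \<le> \<bar>blinfun_apply g x\<bar>"
    using x(2) Cmem by blast+
  have T1: "1 \<le> norm (blinfun_apply T x)"
  proof (rule ccontr)
    assume "\<not> 1 \<le> norm (blinfun_apply T x)"
    then have "1 - norm (blinfun_apply T x) > 0" by simp
    then obtain n where n: "inverse (real (Suc n)) < 1 - norm (blinfun_apply T x)"
      using reals_Archimedean by blast
    then show False using xb(2)[of n] by (simp add: inverse_eq_divide)
  qed
  have "norm (blinfun_apply T x) \<le> norm x" using norm_blinfun[of T x] nT by simp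
  then have "x \<in> norm_attaining_set T" unfolding norm_attaining_set_def using T1 xb(1) nT ball_T_bound[OF nT xb(1)] by simp
  then have "x \<in> span Xs" by (rule MT_in_span[OF refl nT V])
  then have "blinfun_apply g x = 0" using g by blast
  then show False using xb(3) dp by simp
qed

lemma deriv_zero:
  fixes T :: "'a::real_normed_vector \<Rightarrow>\<^sub>L 'b::real_normed_vector"
    and c :: "'b \<Rightarrow> ('b \<Rightarrow>\<^sub>L real)"
  assumes refl: "reflexive_space TYPE('a)" and nT: "norm T = 1"
    and V: "finite Xs" "norm_attaining_set T \<inter> {e. e extreme_point_of cball 0 1} \<subseteq> span Xs"
    and E: "finite E" "\<forall>a\<in>E. \<forall>a'\<in>E. blinfun_apply (c a) a' = (if a' = a then 1 else 0)"
    "\<And>y. y \<in> span E"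
    and f: "f \<in> supp_fun T" and g: "\<forall>v\<in>span Xs. blinfun_apply g v = 0"
  shows "blinfun_apply f (tns g y) = 0"
proof -
  have "\<not> blinfun_apply f (tns g y) > 0"
    using deriv_pos_False[OF refl nT V E f g] by blast
  moreover have "\<not> blinfun_apply f (tns g (-y)) > 0"
    using deriv_pos_False[OF refl nT V E f g] by blast
  moreover have "blinfun_apply f (tns g (-y)) = - blinfun_apply f (tns g y)"
    by (simp add: tns_neg_right blinfun.minus_right)
  ultimately show ?thesis by linarith
qed

lemma repr_supp:
  fixes T :: "'a::real_normed_vector \<Rightarrow>\<^sub>L 'b::real_normed_vector"
    and c :: "'b \<Rightarrow> ('b \<Rightarrow>\<^sub>L real)" and gd :: "'a \<Rightarrow> ('a \<Rightarrow>\<^sub>L real)"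
  assumes refl: "reflexive_space TYPE('a)" and nT: "norm T = 1"
    and V: "finite Xs" "norm_attaining_set T \<inter> {e. e extreme_point_of cball 0 1} \<subseteq> span Xs"
    and gd: "\<forall>a\<in>Xs. \<forall>a'\<in>Xs. blinfun_apply (gd a) a' = (if a' = a then 1 else 0)"
    and E: "finite E" "\<forall>a\<in>E. \<forall>a'\<in>E. blinfun_apply (c a) a' = (if a' = a then 1 else 0)"
    "\<And>y. y \<in> span E"
    and f: "f \<in> supp_fun T"
  shows "f = (\<Sum>p\<in>Xs \<times> E. blinfun_apply f (tns (gd (fst p)) (snd p)) *\<^sub>R evf (fst p) (c (snd p)))"
proof (rule blinfun_eqI)
  fix S :: "'a \<Rightarrow>\<^sub>L 'b"
  have Sexp: "S = (\<Sum>v\<in>E. tns (c v o\<^sub>L S) v)"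
  proof (rule blinfun_eqI)
    fix z
    have "blinfun_apply S z = (\<Sum>v\<in>E. blinfun_apply (c v) (blinfun_apply S z) *\<^sub>R v)"
      by (rule expand_dual[OF E(1,2) E(3)])
    then show "blinfun_apply S z = blinfun_apply (\<Sum>v\<in>E. tns (c v o\<^sub>L S) v) z"
      by (simp add: blinfun.sum_left)
  qed
  have step: "blinfun_apply f (tns h v) = (\<Sum>u\<in>Xs. blinfun_apply h u * blinfun_apply f (tns (gd u) v))"
    for h :: "'a \<Rightarrow>\<^sub>L real" and v
  proof -
    define k where "k = h - (\<Sum>u\<in>Xs. blinfun_apply h u *\<^sub>R gd u)"
    have k0: "blinfun_apply k w = 0" if "w \<in> span Xs" for w
    proof (rule linear_eq_0_on_span[OF _ _ that])
      show "linear (blinfun_apply k)" by (rule bounded_linear.linear[OF blinfun.bounded_linear_right])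
    next
      fix w assume w: "w \<in> Xs"
      have "(\<Sum>u\<in>Xs. blinfun_apply h u * blinfun_apply (gd u) w) = (\<Sum>u\<in>Xs. if u = w then blinfun_apply h u else 0)"
        using gd w by (intro sum.cong) auto
      also have "\<dots> = blinfun_apply h w" using V(1) w by simp
      finally show "blinfun_apply k w = 0"
        unfolding k_def by (simp add: blinfun.diff_left blinfun.sum_left blinfun.scaleR_left)
    qed
    have "tns h v = (\<Sum>u\<in>Xs. blinfun_apply h u *\<^sub>R tns (gd u) v) + tns k v"
    proof (rule blinfun_eqI)
      fix z
      have kz: "blinfun_apply k z = blinfun_apply h z - (\<Sum>u\<in>Xs. blinfun_apply h u * blinfun_apply (gd u) z)"
        unfolding k_def by (simp add: blinfun.diff_left blinfun.sum_left blinfun.scaleR_left)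
      have "blinfun_apply ((\<Sum>u\<in>Xs. blinfun_apply h u *\<^sub>R tns (gd u) v) + tns k v) z
          = (\<Sum>u\<in>Xs. blinfun_apply h u * blinfun_apply (gd u) z) *\<^sub>R v + blinfun_apply k z *\<^sub>R v"
        by (simp add: blinfun.add_left blinfun.sum_left blinfun.scaleR_left scaleR_sum_left)
      also have "\<dots> = blinfun_apply h z *\<^sub>R v" unfolding kz by (simp add: scaleR_diff_left)
      finally show "blinfun_apply (tns h v) z = blinfun_apply ((\<Sum>u\<in>Xs. blinfun_apply h u *\<^sub>R tns (gd u) v) + tns k v) z"
        by simp
    qed
    moreover have "blinfun_apply f (tns k v) = 0"
      by (rule deriv_zero[OF refl nT V E f]) (use k0 in blast)
    ultimately show ?thesis
      by (simp add: blinfun.add_right blinfun.sum_right blinfun.scaleR_right)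
  qed
  have "blinfun_apply f S = (\<Sum>v\<in>E. blinfun_apply f (tns (c v o\<^sub>L S) v))"
    by (subst Sexp) (simp add: blinfun.sum_right)
  also have "\<dots> = (\<Sum>v\<in>E. \<Sum>u\<in>Xs. blinfun_apply (c v) (blinfun_apply S u) * blinfun_apply f (tns (gd u) v))"
    by (rule sum.cong[OF HOL.refl], rule trans[OF step], simp)
  also have "\<dots> = (\<Sum>u\<in>Xs. \<Sum>v\<in>E. blinfun_apply (c v) (blinfun_apply S u) * blinfun_apply f (tns (gd u) v))"
    by (rule sum.swap)
  also have "\<dots> = (\<Sum>p\<in>Xs \<times> E. blinfun_apply (c (snd p)) (blinfun_apply S (fst p)) * blinfun_apply f (tns (gd (fst p)) (snd p)))"
    by (subst sum.cartesian_product) (simp add: case_prod_beta)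
  also have "\<dots> = blinfun_apply (\<Sum>p\<in>Xs \<times> E. blinfun_apply f (tns (gd (fst p)) (snd p)) *\<^sub>R evf (fst p) (c (snd p))) S"
    by (simp add: blinfun.sum_left blinfun.scaleR_left) (intro sum.cong HOL.refl, simp add: mult.commute)
  finally show "blinfun_apply f S = blinfun_apply (\<Sum>p\<in>Xs \<times> E. blinfun_apply f (tns (gd (fst p)) (snd p)) *\<^sub>R evf (fst p) (c (snd p))) S" .
qed

lemma indep_by_dual:
  fixes G :: "'p \<Rightarrow> 'v::real_vector" and \<Lambda> :: "'p \<Rightarrow> 'v \<Rightarrow> real"
  assumes lin: "\<And>p. linear (\<Lambda> p)"
    and d: "\<And>p q. p \<in> P \<Longrightarrow> q \<in> P \<Longrightarrow> \<Lambda> p (G q) = (if q = p then 1 else 0)"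
  shows "independent (G ` P)" "inj_on G P"
proof -
  show inj: "inj_on G P"
  proof (rule inj_onI)
    fix p q assume pq: "p \<in> P" "q \<in> P" "G p = G q"
    have "\<Lambda> p (G q) = 1" using d[OF pq(1) pq(1)] pq(3) by simp
    then show "p = q" using d[OF pq(1,2)] by (auto split: if_splits)
  qed
  show "independent (G ` P)"
  proof
    assume "dependent (G ` P)"
    then obtain F where F: "F \<in> G ` P" "F \<in> span (G ` P - {F})" unfolding dependent_def by blast
    then obtain p where p: "p \<in> P" "F = G p" by blast
    have "\<Lambda> p F = 0"
    proof (rule linear_eq_0_on_span[OF lin _ F(2)])
      fix w assume "w \<in> G ` P - {F}"
      then obtain q where q: "q \<in> P" "w = G q" "G q \<noteq> G p" using p by blast
      then have "q \<noteq> p" by blast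
      then show "\<Lambda> p w = 0" using d[OF p(1) q(1)] q by simp
    qed
    then show False using d[OF p(1) p(1)] p by simp
  qed
qed

lemma evf_supp:
  fixes T :: "'a::real_normed_vector \<Rightarrow>\<^sub>L 'b::real_normed_vector"
  assumes nT: "norm T = 1" and u: "norm u = 1" and \<phi>: "\<phi> \<in> supp_fun (blinfun_apply T u)"
  shows "evf u \<phi> \<in> supp_fun T"
proof -
  have \<phi>1: "norm \<phi> = 1" "blinfun_apply \<phi> (blinfun_apply T u) = 1" using \<phi> unfolding supp_fun_def by auto
  have le: "norm (evf u \<phi>) \<le> 1" using norm_evf[of u \<phi>] \<phi>1 u by simp
  have "1 = norm (blinfun_apply (evf u \<phi>) T)" using \<phi>1 by simp
  also have "\<dots> \<le> norm (evf u \<phi>) * norm T" by (rule norm_blinfun)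
  finally have "1 \<le> norm (evf u \<phi>)" using nT by simp
  then show ?thesis unfolding supp_fun_def using le \<phi>1 by simp
qed

lemma dual_span_full:
  fixes E :: "'b::real_normed_vector set" and c :: "'b \<Rightarrow> ('b \<Rightarrow>\<^sub>L real)"
    and J :: "('b \<Rightarrow>\<^sub>L real) set"
  assumes E: "finite E" "\<forall>a\<in>E. \<forall>a'\<in>E. blinfun_apply (c a) a' = (if a' = a then 1 else 0)"
    "\<And>y. y \<in> span E"
    and dJ: "dim J = card E"
  shows "\<psi> \<in> span J"
proof -
  have all: "\<phi> \<in> span (c ` E)" for \<phi> :: "'b \<Rightarrow>\<^sub>L real"
  proof -
    have "\<phi> = (\<Sum>v\<in>E. blinfun_apply \<phi> v *\<^sub>R c v)"
    proof (rule blinfun_eqI)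
      fix y
      have "blinfun_apply \<phi> y = blinfun_apply \<phi> (\<Sum>v\<in>E. blinfun_apply (c v) y *\<^sub>R v)"
        using expand_dual[OF E(1,2) E(3)] by metis
      then show "blinfun_apply \<phi> y = blinfun_apply (\<Sum>v\<in>E. blinfun_apply \<phi> v *\<^sub>R c v) y"
        by (simp add: blinfun.sum_right blinfun.sum_left blinfun.scaleR_right blinfun.scaleR_left mult.commute)
    qed
    also have "\<dots> \<in> span (c ` E)"
      by (intro span_sum span_scale span_base) simp
    finally show ?thesis .
  qed
  obtain B where B: "B \<subseteq> J" "independent B" "J \<subseteq> span B" "card B = dim J" by (rule basis_exists)
  have spJB: "span J = span B"
  proof (rule subset_antisym)
    show "span J \<subseteq> span B" using B(3) by (rule span_minimal) (rule subspace_span)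
    show "span B \<subseteq> span J" using B(1) by (rule span_mono)
  qed
  show ?thesis
  proof (rule ccontr)
    assume "\<psi> \<notin> span J"
    then have nB: "\<psi> \<notin> span B" using spJB by simp
    then have ind: "independent (insert \<psi> B)" using B(2) by (rule independent_insertI)
    have bnd: "finite (insert \<psi> B) \<and> card (insert \<psi> B) \<le> card (c ` E)"
      by (rule independent_span_bound[OF finite_imageI[OF E(1)] ind]) (use all in blast)
    then have "finite B" by simp
    moreover have "\<psi> \<notin> B" using nB span_base by blast
    ultimately have "card (insert \<psi> B) = card B + 1" by simp
    moreover have "card (c ` E) \<le> card E" using E(1) by (rule card_image_le)
    ultimately show False using bnd B(4) dJ by simp
  qed
qed

theorem theorem3p5:
  fixes T :: "'a::banach \<Rightarrow>\<^sub>L 'b::banach"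
    and x :: "nat \<Rightarrow> 'a" and r m :: nat
  assumes "reflexive_space TYPE('a)"
    and "\<exists>B::'b set. finite B \<and> span B = UNIV"
    and "dim (UNIV :: 'b set) = m"
    and "norm T = 1"
    and "inj_on x {..<r}"
    and "independent (x ` {..<r})"
    and "x ` {..<r} \<subseteq> norm_attaining_set T \<inter> {e. e extreme_point_of cball 0 1}"
    and "norm_attaining_set T \<inter> {e. e extreme_point_of cball 0 1} \<subseteq> span (x ` {..<r})"
    and "\<forall>i<r. k_smooth (blinfun_apply T (x i)) m"
  shows "k_smooth T (m * r)"
proof -
  note refl = assms(1) and nT = assms(4)
  obtain B0 :: "'b set" where B0: "finite B0" "span B0 = UNIV" using assms(2) by blast
  obtain E :: "'b set" where E: "E \<subseteq> UNIV" "independent E" "UNIV \<subseteq> span E" "card E = dim (UNIV::'b set)"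
    by (rule basis_exists)
  have finE: "finite E" using independent_span_bound[OF B0(1) E(2)] B0(2) by blast
  have cardE: "card E = m" using E(4) assms(3) by simp
  obtain c :: "'b \<Rightarrow> ('b \<Rightarrow>\<^sub>L real)" where c: "\<forall>a\<in>E. \<forall>a'\<in>E. blinfun_apply (c a) a' = (if a' = a then 1 else 0)"
    using dual_family[OF finE E(2)] by blast
  have spE: "\<And>y. y \<in> span E" using E(3) by blast
  define Xs where "Xs = x ` {..<r}"
  have finX: "finite Xs" unfolding Xs_def by simp
  have indX: "independent Xs" unfolding Xs_def by (rule assms(6))
  have cardX: "card Xs = r" unfolding Xs_def using card_image[OF assms(5)] by simp
  obtain gd :: "'a \<Rightarrow> ('a \<Rightarrow>\<^sub>L real)" where gd: "\<forall>a\<in>Xs. \<forall>a'\<in>Xs. blinfun_apply (gd a) a' = (if a' = a then 1 else 0)"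
    using dual_family[OF finX indX] by blast
  have V: "finite Xs" "norm_attaining_set T \<inter> {e. e extreme_point_of cball 0 1} \<subseteq> span Xs"
    using finX assms(8) unfolding Xs_def by auto
  define G where "G p = evf (fst p) (c (snd p))" for p :: "'a \<times> 'b"
  define AA where "AA = G ` (Xs \<times> E)"
  have finAA: "finite AA" unfolding AA_def using finX finE by simp
  have sub1: "supp_fun T \<subseteq> span AA"
  proof
    fix f assume f: "f \<in> supp_fun T"
    have "f = (\<Sum>p\<in>Xs \<times> E. blinfun_apply f (tns (gd (fst p)) (snd p)) *\<^sub>R evf (fst p) (c (snd p)))"
      by (rule repr_supp[OF refl nT V gd finE c spE f])
    also have "\<dots> \<in> span AA"
    proof (intro span_sum span_scale span_base)
      fix p assume "p \<in> Xs \<times> E"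
      then show "evf (fst p) (c (snd p)) \<in> AA" unfolding AA_def G_def by blast
    qed
    finally show "f \<in> span AA" .
  qed
  have sub2: "AA \<subseteq> span (supp_fun T)"
  proof
    fix F assume "F \<in> AA"
    then obtain u v where uv: "u \<in> Xs" "v \<in> E" "F = evf u (c v)" unfolding AA_def G_def by auto
    then obtain i where i: "i < r" "u = x i" unfolding Xs_def by auto
    have ks: "k_smooth (blinfun_apply T u) m" using assms(9) i by simp
    define J where "J = supp_fun (blinfun_apply T u)"
    have dJ: "dim J = card E" using ks cardE unfolding k_smooth_def J_def by simp
    have cJ: "c v \<in> span J" by (rule dual_span_full[OF finE c spE dJ])
    have un: "norm u = 1" using assms(7) i unfolding norm_attaining_set_def by auto
    have img: "evf u ` J \<subseteq> supp_fun T" unfolding J_def using evf_supp[OF nT un] by blast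
    have "evf u (c v) \<in> evf u ` span J" using cJ by blast
    also have "\<dots> = span (evf u ` J)" by (rule span_linear_image[OF evf_linear, symmetric])
    also have "\<dots> \<subseteq> span (supp_fun T)" using img by (rule span_mono)
    finally show "F \<in> span (supp_fun T)" using uv by simp
  qed
  have eqspan: "span (supp_fun T) = span AA"
  proof (rule subset_antisym)
    show "span (supp_fun T) \<subseteq> span AA" using sub1 by (rule span_minimal) (rule subspace_span)
    show "span AA \<subseteq> span (supp_fun T)" using sub2 by (rule span_minimal) (rule subspace_span)
  qed
  define \<Lambda> where "\<Lambda> p F = blinfun_apply F (tns (gd (fst p)) (snd p))" for p :: "'a \<times> 'b" and F :: "('a \<Rightarrow>\<^sub>L 'b) \<Rightarrow>\<^sub>L real"
  have lin: "linear (\<Lambda> p)" for p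
    unfolding \<Lambda>_def by (rule bounded_linear.linear[OF blinfun.bounded_linear_left])
  have d: "\<Lambda> p (G q) = (if q = p then 1 else 0)" if "p \<in> Xs \<times> E" "q \<in> Xs \<times> E" for p q
  proof -
    have "\<Lambda> p (G q) = blinfun_apply (gd (fst p)) (fst q) * blinfun_apply (c (snd q)) (snd p)"
      unfolding \<Lambda>_def G_def by (simp add: blinfun.scaleR_right)
    also have "\<dots> = (if fst q = fst p then 1 else 0) * (if snd p = snd q then 1 else 0)"
      using gd c that by auto
    also have "\<dots> = (if q = p then 1 else 0)" by (cases p, cases q) auto
    finally show ?thesis .
  qed
  have indAA: "independent AA" and injG: "inj_on G (Xs \<times> E)"
    using indep_by_dual[of \<Lambda> "Xs \<times> E" G, OF lin d] unfolding AA_def by auto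
  have cardAA: "card AA = m * r"
    unfolding AA_def using card_image[OF injG] card_cartesian_product[of Xs E] cardX cardE by simp
  have "dim (supp_fun T) = dim AA"
    by (metis dim_span eqspan)
  also have "\<dots> = m * r" using dim_eq_card_independent[OF indAA] cardAA by simp
  finally have dimT: "dim (supp_fun T) = m * r" .
  show ?thesis unfolding k_smooth_def using nT finAA eqspan dimT by metis
qed

end
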